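(* Let $N\ge1$, $d$ be integers and $0\le m_1<\dots<m_N<d$. Then the Wronski determinant of the truncated binomials $P_{m_1;d},\dots,P_{m_N;d},P_{d;d}$ satisfies $$\det\Big(\tfrac{d^j}{dx^j}P_{m_i;d}(x)\Big)_{0\le i,j\le N}=c\cdot x^{\,m_1+\dots+m_N-N(N-1)/2}(x+1)^{d-N},$$ where $m_0:=d$ is used for the row of $P_{d;d}$ and $c$ is a nonzero constant.
   Context: The truncated binomial is $P_{m;d}(x)=\sum_{j=0}^{m}\binom{d}{j}x^j$ for $0\le m\le d$; $P_{d;d}(x)=(x+1)^d$. *)

theory Defs
  imports "Jordan_Normal_Form.Determinant" "HOL-Computational_Algebra.Polynomial"
begin

definition trunc_binom :: "nat \<Rightarrow> nat \<Rightarrow> real poly" where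
  "trunc_binom m d = (\<Sum>j\<le>m. monom (of_nat (d choose j)) j)"

definition wronski_tb :: "nat \<Rightarrow> nat \<Rightarrow> (nat \<Rightarrow> nat) \<Rightarrow> real poly mat" where
  "wronski_tb N d m = mat (Suc N) (Suc N)
     (\<lambda>(i, j). (pderiv ^^ j) (trunc_binom (if i = 0 then d else m i) d))"

end

theory Submission
  imports Defs
begin


definition Y :: "real poly" where "Y = [:1,1:]"
lemma pderiv_Y[simp]: "pderiv Y = 1" by (simp add: Y_def pderiv_pCons)
lemma coeff_Y: "coeff (Y * p) k = coeff p k + (if k = 0 then 0 else coeff p (k - 1))"
  by (simp add: Y_def coeff_pCons split: nat.split)

lemma Dk_add: "(pderiv^^k) (p + q) = (pderiv^^k) p + (pderiv^^k) (q::real poly)"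
  by (induction k) (auto simp: pderiv_add)
lemma Dk_diff: "(pderiv^^k) (p - q) = (pderiv^^k) p - (pderiv^^k) (q::real poly)"
  by (induction k) (auto simp: pderiv_diff)
lemma Dk_smult: "(pderiv^^k) (smult c p) = smult c ((pderiv^^k) (p::real poly))"
  by (induction k) (auto simp: pderiv_smult)

lemma Dk_Y: "(pderiv^^k) (Y * pderiv f) = Y * (pderiv^^k) (pderiv f) + smult (of_nat k) ((pderiv^^k) f)"
proof (induction k)
  case 0 then show ?case by simp
next
  case (Suc k)
  have c: "pderiv ((pderiv^^k) h) = (pderiv^^k) (pderiv h)" for h
    by (metis comp_apply funpow.simps(2) funpow_Suc_right)
  have "(pderiv^^(Suc k)) (Y * pderiv f) = pderiv ((pderiv^^k) (Y * pderiv f))" by simp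
  also have "\<dots> = pderiv (Y * (pderiv^^k) (pderiv f)) + smult (of_nat k) (pderiv ((pderiv^^k) f))"
    using Suc by (simp add: pderiv_add pderiv_smult)
  also have "\<dots> = Y * (pderiv^^(Suc k)) (pderiv f) + smult (of_nat (Suc k)) ((pderiv^^(Suc k)) f)"
    by (simp add: pderiv_mult c algebra_simps smult_add_left)
  finally show ?case .
qed

lemma colop: "Y * (pderiv^^(Suc k)) f - smult (of_nat d - of_nat k) ((pderiv^^k) f)
   = (pderiv^^k) (Y * pderiv f - smult (of_nat d) f)"
proof -
  have c: "(pderiv^^(Suc k)) h = (pderiv^^k) (pderiv h)" for h
    by (metis comp_apply funpow_Suc_right)
  show ?thesis
    by (simp only: Dk_diff Dk_smult Dk_Y c) (simp add: algebra_simps smult_diff_left)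
qed

lemma tb_dd: "trunc_binom d d = Y ^ d"
proof -
  have "Y = monom 1 1 + 1" by (simp add: Y_def monom_Suc one_pCons)
  hence "Y ^ d = (monom 1 1 + 1) ^ d" by simp
  also have "\<dots> = (\<Sum>k\<le>d. of_nat (d choose k) * monom 1 1 ^ k * 1 ^ (d - k))"
    by (rule binomial_ring)
  also have "\<dots> = trunc_binom d d"
    unfolding trunc_binom_def
    by (intro sum.cong refl) (simp add: monom_altdef of_nat_poly mult_ac)
  finally show ?thesis by simp
qed

lemma L_F0: "Y * pderiv (Y ^ d) - smult (of_nat d) (Y ^ d) = 0"
  apply (cases d) apply simp
  apply (simp add: pderiv_power_Suc algebra_simps del: power_Suc)
  apply simp done

lemma coeff_tb: "coeff (trunc_binom m d) k = (if k \<le> m then of_nat (d choose k) else 0)"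
  unfolding trunc_binom_def by (simp add: coeff_sum coeff_monom)

lemma L_P: assumes "m < d"
  shows "Y * pderiv (trunc_binom m d) - smult (of_nat d) (trunc_binom m d)
     = smult (- (of_nat (d - m) * of_nat (d choose m))) (monom 1 m)"
proof (rule poly_eqI)
  fix k
  have bin: "real (Suc k) * real (d choose Suc k) = (real d - real k) * real (d choose k)" if "k < d" for k
  proof -
    have "Suc k * (d choose Suc k) = (d - k) * (d choose k)"
      by (metis binomial_absorb_comp binomial_absorption mult.commute) 
    then show ?thesis using that by (metis of_nat_diff of_nat_mult less_imp_le)
  qed
  let ?P = "trunc_binom m d"
  have l: "coeff (Y * pderiv ?P - smult (of_nat d) ?P) k
     = real (Suc k) * coeff ?P (Suc k) + real k * coeff ?P k - real d * coeff ?P k"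
    by (cases k) (simp_all add: coeff_Y coeff_pderiv)
  have r: "real (Suc k) * coeff ?P (Suc k) + real k * coeff ?P k - real d * coeff ?P k
     = coeff (smult (- (of_nat (d - m) * of_nat (d choose m))) (monom 1 m)) k"
  proof (cases "k < m")
    case True
    then show ?thesis using assms bin[of k] by (simp add: coeff_tb coeff_monom algebra_simps)
  next
    case False
    then show ?thesis using assms by (cases "k = m") (auto simp: coeff_tb coeff_monom algebra_simps of_nat_diff)
  qed
  show "coeff (Y * pderiv ?P - smult (of_nat d) ?P) k =
        coeff (smult (- (of_nat (d - m) * of_nat (d choose m))) (monom 1 m)) k"
    using l r by simp
qed



definition ff :: "nat \<Rightarrow> nat \<Rightarrow> nat" where "ff n j = (\<Prod>k<j. n - k)"

lemma ff_zero: "n < j \<Longrightarrow> ff n j = 0"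
  unfolding ff_def by (rule prod_zero) auto

lemma ff_self: "ff n n \<noteq> 0"
  unfolding ff_def by (simp add: prod_zero_iff)

lemma real_ff: "real (ff n j) = (\<Prod>k<j. real n - real k)"
proof (cases "j \<le> n")
  case True
  then show ?thesis unfolding ff_def of_nat_prod by (intro prod.cong refl) (simp add: of_nat_diff)
next
  case False
  then have "ff n j = 0" by (simp add: ff_zero)
  moreover have "(\<Prod>k<j. real n - real k) = 0" using False by (intro prod_zero) (auto intro!: bexI[of _ n])
  ultimately show ?thesis by simp
qed

definition fpoly :: "nat \<Rightarrow> real poly" where "fpoly j = (\<Prod>k<j. [:- real k, 1:])"

lemma poly_fpoly: "poly (fpoly j) (real n) = real (ff n j)"
  unfolding fpoly_def real_ff by (simp add: poly_prod)

lemma degree_fpoly: "degree (fpoly j) \<le> j"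
proof -
  have "degree (fpoly j) \<le> sum (degree \<circ> (\<lambda>k. [:- real k, 1:])) {..<j}"
    unfolding fpoly_def by (rule degree_prod_sum_le) simp
  also have "\<dots> = j" by simp
  finally show ?thesis .
qed

lemma Kr_det_nz:
  assumes inj: "inj_on g {..<N}"
  shows "det (mat N N (\<lambda>(i,j). real (ff (g i) j))) \<noteq> 0"
proof
  let ?K = "mat N N (\<lambda>(i,j). real (ff (g i) j))"
  assume "det ?K = 0"
  then obtain v where v: "v \<in> carrier_vec N" "v \<noteq> 0\<^sub>v N" "?K *\<^sub>v v = 0\<^sub>v N"
    using det_0_iff_vec_prod_zero_field[of ?K N] by auto
  define p where "p = (\<Sum>j<N. smult (v $ j) (fpoly j))"
  have pv: "poly p (real n) = (\<Sum>j<N. v $ j * real (ff n j))" for n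
    unfolding p_def by (simp add: poly_sum poly_fpoly mult.commute)
  have eq: "(\<Sum>j<N. v $ j * real (ff (g i) j)) = 0" if "i < N" for i
  proof -
    have "(?K *\<^sub>v v) $ i = 0" using v(3) that by simp
    then show ?thesis using that v(1)
      by (simp add: mult_mat_vec_def scalar_prod_def lessThan_atLeast0 mult.commute)
  qed
  have p0: "p = 0"
  proof (rule ccontr)
    assume pn: "p \<noteq> 0"
    have dp: "degree p < N"
    proof (cases N)
      case 0 then show ?thesis using pn p_def by simp
    next
      case (Suc N')
      have "degree p \<le> N'" unfolding p_def
        apply (rule degree_sum_le) apply simp
        using degree_fpoly Suc by (meson degree_smult_le le_trans lessThan_iff less_Suc_eq_le)
      then show ?thesis using Suc by simp
    qed
    have sub: "(\<lambda>i. real (g i)) ` {..<N} \<subseteq> {x. poly p x = 0}"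
      using eq pv by auto
    have "card ((\<lambda>i. real (g i)) ` {..<N}) = N"
      using inj by (simp add: card_image inj_on_def)
    moreover have "card ((\<lambda>i. real (g i)) ` {..<N}) \<le> card {x. poly p x = 0}"
      using sub poly_roots_finite[OF pn] by (rule card_mono[rotated])
    ultimately show False using card_poly_roots_bound[OF pn] dp by linarith
  qed
  have "\<forall>j<n. v $ j = 0" if "n \<le> N" for n
    using that
  proof (induction n)
    case 0 then show ?case by simp
  next
    case (Suc n)
    then have IH: "\<forall>j<n. v $ j = 0" by simp
    have "0 = poly p (real n)" using p0 by simp
    also have "\<dots> = (\<Sum>j<N. v $ j * real (ff n j))" by (rule pv)
    also have "\<dots> = v $ n * real (ff n n)"
    proof -
      have "(\<Sum>j<N. v $ j * real (ff n j)) = v $ n * real (ff n n) + (\<Sum>j\<in>{..<N} - {n}. v $ j * real (ff n j))"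
        using Suc.prems by (intro sum.remove) auto
      also have "(\<Sum>j\<in>{..<N} - {n}. v $ j * real (ff n j)) = 0"
        using IH by (intro sum.neutral) (auto simp: ff_zero dest: nat_neq_iff[THEN iffD1])
      finally show ?thesis by simp
    qed
    finally have "v $ n = 0" using ff_self by simp
    then show ?case using IH less_Suc_eq by auto
  qed
  then have "v = 0\<^sub>v N" using v(1) by (intro eq_vecI) auto
  then show False using v(2) by simp
qed



lemma Dk_zero: "(pderiv^^k) (0::real poly) = 0" by (induction k) auto

lemma Dmonom: "(pderiv^^j) (monom (1::real) m) = monom (real (ff m j)) (m - j)"
proof (induction j)
  case 0 then show ?case by (simp add: ff_def)
next
  case (Suc j)
  have "ff m (Suc j) = ff m j * (m - j)" by (simp add: ff_def)
  then show ?case using Suc by (simp add: pderiv_monom mult.commute)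
qed

lemma mat_diag_mult: assumes A: "A \<in> carrier_mat n n"
  shows "mat n n (\<lambda>(i,j). if i = j then f i else 0) * A = mat n n (\<lambda>(i,j). f i * A $$ (i,j))"
  using A by (intro eq_matI) (auto simp: scalar_prod_def lessThan_atLeast0[symmetric] if_distrib[of "\<lambda>x. x * _"] cong: if_cong)

lemma mult_mat_diag: assumes A: "A \<in> carrier_mat n n"
  shows "A * mat n n (\<lambda>(i,j). if i = j then f i else 0) = mat n n (\<lambda>(i,j). A $$ (i,j) * f j)"
  using A by (intro eq_matI) (auto simp: scalar_prod_def lessThan_atLeast0[symmetric] if_distrib[of "\<lambda>x. _ * x"] cong: if_cong)

lemma det_diag: "det (mat n n (\<lambda>(i,j). if i = j then f i else (0::'a::comm_ring_1))) = (\<Prod>i<n. f i)"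
proof -
  have "det (mat n n (\<lambda>(i,j). if i = j then f i else (0::'a))) = prod_list (diag_mat (mat n n (\<lambda>(i,j). if i = j then f i else (0::'a))))"
    by (rule det_upper_triangular) (auto simp: upper_triangular_def)
  also have "\<dots> = (\<Prod>i<n. f i)"
    by (simp add: diag_mat_def prod.list_conv_set_nth lessThan_atLeast0)
  finally show ?thesis .
qed

lemma det_scale_rows: assumes A: "A \<in> carrier_mat n n"
  shows "det (mat n n (\<lambda>(i,j). f i * A $$ (i,j))) = (\<Prod>i<n. f i) * det (A :: 'a::comm_ring_1 mat)"
  by (simp add: mat_diag_mult[OF A, symmetric] det_mult[OF _ A] det_diag)

lemma det_scale_cols: assumes A: "A \<in> carrier_mat n n"
  shows "det (mat n n (\<lambda>(i,j). A $$ (i,j) * f j)) = det (A :: 'a::comm_ring_1 mat) * (\<Prod>i<n. f i)"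
  by (simp add: mult_mat_diag[OF A, symmetric] det_mult[OF A] det_diag)

interpretation cpoly: comm_ring_hom "\<lambda>x::real. [:x:]"
  by unfold_locales (auto simp: one_pCons)

lemma prod_monom1: "(\<Prod>i\<in>A. monom (1::real) (f i)) = monom 1 (\<Sum>i\<in>A. f i)"
  by (induction A rule: infinite_finite_induct) (auto simp: mult_monom)

lemma det_monom_wr:
  "det (mat N N (\<lambda>(i,j). (pderiv^^j) (monom (1::real) (g i)))) * monom 1 (\<Sum>j<N. j)
   = smult (det (mat N N (\<lambda>(i,j). real (ff (g i) j)))) (monom 1 (\<Sum>i<N. g i))"
proof -
  let ?A = "mat N N (\<lambda>(i,j). (pderiv^^j) (monom (1::real) (g i)))"
  let ?Kr = "mat N N (\<lambda>(i,j). real (ff (g i) j))"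
  let ?Kp = "map_mat (\<lambda>x. [:x:]) ?Kr"
  have "det ?A * monom 1 (\<Sum>j<N. j) = det (mat N N (\<lambda>(i,j). ?A $$ (i,j) * monom 1 j))"
    by (subst det_scale_cols) (auto simp: prod_monom1)
  also have "mat N N (\<lambda>(i,j). ?A $$ (i,j) * monom 1 j) = mat N N (\<lambda>(i,j). monom 1 (g i) * ?Kp $$ (i,j))"
  proof (rule eq_matI)
    fix i j assume ij: "i < dim_row (mat N N (\<lambda>(i,j). monom 1 (g i) * ?Kp $$ (i,j)))"
      "j < dim_col (mat N N (\<lambda>(i,j). monom 1 (g i) * ?Kp $$ (i,j)))"
    then have "i < N" "j < N" by auto
    then show "mat N N (\<lambda>(i,j). ?A $$ (i,j) * monom 1 j) $$ (i,j) = mat N N (\<lambda>(i,j). monom 1 (g i) * ?Kp $$ (i,j)) $$ (i,j)"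
      by (cases "j \<le> g i") (auto simp: Dmonom mult_monom ff_zero smult_monom)
  qed auto
  also have "det \<dots> = (\<Prod>i<N. monom 1 (g i)) * det ?Kp"
    by (rule det_scale_rows) auto
  also have "\<dots> = smult (det ?Kr) (monom 1 (\<Sum>i<N. g i))"
    by (simp add: prod_monom1 del: map_mat_def)
  finally show ?thesis .
qed



lemma strict_mono_ge: fixes i N :: nat and m :: "nat \<Rightarrow> nat" assumes "strict_mono_on {1..N} m"
  shows "1 \<le> i \<Longrightarrow> i \<le> N \<Longrightarrow> m i \<ge> i - 1"
proof (induction i)
  case 0 then show ?case by simp
next
  case (Suc i)
  show ?case
  proof (cases "i = 0")
    case False
    then have "m i < m (Suc i)" using assms(1) Suc.prems by (auto simp: strict_mono_on_def)
    then show ?thesis using Suc False by auto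
  qed simp
qed

lemma strict_mono_le: fixes m :: "nat \<Rightarrow> nat" and N i :: nat assumes "strict_mono_on {1..N} m" "1 \<le> i" "i \<le> N"
  shows "m i \<le> m N"
proof (cases "i = N")
  case False
  have "i \<in> {1..N}" "N \<in> {1..N}" "i < N" using False assms(2,3) by auto
  then have "m i < m N" by (rule strict_mono_onD[OF assms(1)])
  then show ?thesis by simp
qed simp

lemma prod_list_upt: "prod_list (map f [0..<n]) = (\<Prod>i<n. f i)"
  by (subst prod.distinct_set_conv_list[symmetric]) (auto simp: lessThan_atLeast0)

theorem mainTheorem2:
  fixes N d :: nat and m :: "nat \<Rightarrow> nat"
  assumes "N \<ge> 1"
    and "strict_mono_on {1..N} m"
    and "m N < d"
  shows "\<exists>c::real. c \<noteq> 0 \<and>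
    det (wronski_tb N d m) =
      smult c (monom 1 ((\<Sum>i=1..N. m i) - N * (N - 1) div 2) * [:1, 1:] ^ (d - N))"
proof -
  define F where "F i = trunc_binom (if i = 0 then d else m i) d" for i
  define W where "W = wronski_tb N d m"
  define L where "L p = Y * pderiv p - smult (of_nat d) p" for p
  have W: "W \<in> carrier_mat (Suc N) (Suc N)" unfolding W_def wronski_tb_def by simp
  have Wij: "W $$ (i,j) = (pderiv^^j) (F i)" if "i < Suc N" "j < Suc N" for i j
    using that unfolding W_def wronski_tb_def F_def by simp
  define U where "U = mat (Suc N) (Suc N) (\<lambda>(i,j). if i = j then (if j = 0 then 1 else Y)
      else if j = Suc i then [:-(real d - real i):] else 0)"
  have U: "U \<in> carrier_mat (Suc N) (Suc N)" unfolding U_def by simp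
  have detU: "det U = Y ^ N"
  proof -
    have "det U = prod_list (diag_mat U)"
      by (rule det_upper_triangular[OF _ U]) (auto simp: upper_triangular_def U_def)
    also have "\<dots> = (\<Prod>i<Suc N. if i = 0 then 1 else Y)"
      unfolding diag_mat_def using U by (simp add: prod_list_upt U_def del: upt_Suc)
    also have "\<dots> = Y ^ N" by (simp only: prod.lessThan_Suc_shift) simp
    finally show ?thesis .
  qed
  have WU: "(W * U) $$ (i,j) = (if j = 0 then F i else (pderiv^^(j-1)) (L (F i)))"
    if ij: "i < Suc N" "j < Suc N" for i j
  proof -
    have "(W * U) $$ (i,j) = (\<Sum>k<Suc N. W $$ (i,k) * U $$ (k,j))"
      using W U ij by (simp add: scalar_prod_def lessThan_atLeast0)
    also have "\<dots> = (if j = 0 then F i else (pderiv^^(j-1)) (L (F i)))"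
    proof (cases j)
      case 0
      have "(\<Sum>k<Suc N. W $$ (i,k) * U $$ (k,j)) = (\<Sum>k<Suc N. if k = 0 then W $$ (i,k) else 0)"
        using 0 by (intro sum.cong refl) (auto simp: U_def)
      then show ?thesis using 0 ij by (simp add: Wij)
    next
      case (Suc j')
      have "(\<Sum>k<Suc N. W $$ (i,k) * U $$ (k,j)) = (\<Sum>k<Suc N. (if k = j then W $$ (i,k) * Y else 0)
         + (if k = j' then W $$ (i,k) * [:-(real d - real j'):] else 0))"
        using Suc ij by (intro sum.cong refl) (auto simp: U_def)
      also have "\<dots> = W $$ (i,j) * Y + W $$ (i,j') * [:-(real d - real j'):]"
        using Suc ij by (simp add: sum.distrib)
      also have "\<dots> = Y * (pderiv^^(Suc j')) (F i) - smult (of_nat d - of_nat j') ((pderiv^^j') (F i))"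
        using Suc ij by (simp add: Wij algebra_simps) (simp add: smult_add_left[symmetric])
      also have "\<dots> = (pderiv^^j') (L (F i))" unfolding L_def by (rule colop)
      finally show ?thesis using Suc by simp
    qed
    finally show ?thesis .
  qed
  have mlt: "m (Suc i) < d" if "i < N" for i
    using strict_mono_le[OF assms(2), of "Suc i"] that assms(3) by simp
  define c where "c i = -(real (d - m i) * real (d choose m i))" for i
  have cnz: "c (Suc i) \<noteq> 0" if "i < N" for i
    using mlt[OF that] unfolding c_def by simp
  have LF0: "L (F 0) = 0" unfolding L_def F_def by (simp add: tb_dd L_F0)
  have LFi: "L (F (Suc i)) = smult (c (Suc i)) (monom 1 (m (Suc i)))" if "i < N" for i
    unfolding L_def F_def c_def using L_P[OF mlt[OF that]] by simp
  have WUc: "W * U \<in> carrier_mat (Suc N) (Suc N)" using W U by simp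
  have detWU: "det (W * U) = det W * Y ^ N" using det_mult[OF W U] detU by simp
  have lap: "det (W * U) = Y ^ d * det (mat_delete (W * U) 0 0)"
  proof -
    have "det (W * U) = (\<Sum>j<Suc N. (W * U) $$ (0,j) * cofactor (W * U) 0 j)"
      by (rule laplace_expansion_row[OF WUc]) simp
    also have "\<dots> = (W * U) $$ (0,0) * cofactor (W * U) 0 0
        + (\<Sum>j<N. (W * U) $$ (0,Suc j) * cofactor (W * U) 0 (Suc j))"
      by (rule sum.lessThan_Suc_shift)
    also have "(\<Sum>j<N. (W * U) $$ (0,Suc j) * cofactor (W * U) 0 (Suc j)) = 0"
      by (intro sum.neutral) (auto simp: WU LF0 Dk_zero)
    also have "(W * U) $$ (0,0) = Y ^ d" by (simp add: WU F_def tb_dd)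
    finally show ?thesis by (simp add: cofactor_def)
  qed
  define A2 where "A2 = mat N N (\<lambda>(i,j). (pderiv^^j) (monom (1::real) (m (Suc i))))"
  have MD: "mat_delete (W * U) 0 0 = mat N N (\<lambda>(i,j). [:c (Suc i):] * A2 $$ (i,j))"
  proof (rule eq_matI)
    fix i j assume "i < dim_row (mat N N (\<lambda>(i,j). [:c (Suc i):] * A2 $$ (i,j)))"
      "j < dim_col (mat N N (\<lambda>(i,j). [:c (Suc i):] * A2 $$ (i,j)))"
    then have ij: "i < N" "j < N" by auto
    then show "mat_delete (W * U) 0 0 $$ (i,j) = mat N N (\<lambda>(i,j). [:c (Suc i):] * A2 $$ (i,j)) $$ (i,j)"
    proof -
      have "mat_delete (W * U) 0 0 $$ (i,j) = (W * U) $$ (Suc i, Suc j)"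
        using WUc ij by (simp add: mat_delete_def del: index_mult_mat)
      also have "\<dots> = smult (c (Suc i)) ((pderiv^^j) (monom 1 (m (Suc i))))"
        using ij by (simp add: WU LFi Dk_smult del: index_mult_mat)
      finally show ?thesis using ij by (simp add: A2_def)
    qed
  qed (use WUc in auto)
  have detMD: "det (mat_delete (W * U) 0 0) = (\<Prod>i<N. [:c (Suc i):]) * det A2"
    unfolding MD by (rule det_scale_rows) (simp add: A2_def)
  define K where "K = mat N N (\<lambda>(i,j). real (ff (m (Suc i)) j))"
  have inj: "inj_on (\<lambda>i. m (Suc i)) {..<N}"
  proof (rule inj_onI)
    fix a b assume ab: "a \<in> {..<N}" "b \<in> {..<N}" "m (Suc a) = m (Suc b)"
    show "a = b"
    proof (rule ccontr)
      assume "a \<noteq> b"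
      then have "a < b \<or> b < a" by arith
      then show False using ab strict_mono_onD[OF assms(2), of "Suc a" "Suc b"]
        strict_mono_onD[OF assms(2), of "Suc b" "Suc a"] by auto
    qed
  qed
  have Knz: "det K \<noteq> 0" unfolding K_def by (rule Kr_det_nz[OF inj])
  define S where "S = (\<Sum>i<N. m (Suc i))"
  define T where "T = (\<Sum>j<N::nat. j)"
  have ST: "T \<le> S" unfolding S_def T_def
    by (intro sum_mono) (use strict_mono_ge[OF assms(2)] in force)
  have S_eq: "(\<Sum>i=1..N. m i) = S" unfolding S_def
    by (simp add: sum.atLeast1_atMost_eq)
  have T2: "2 * (\<Sum>j<n::nat. j) = n * (n - 1)" for n
  proof (induction n)
    case (Suc n)
    have "2 * (\<Sum>j<Suc n. j) = 2 * (\<Sum>j<n. j) + 2 * n" by simp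
    also have "\<dots> = n * (n - 1) + 2 * n" using Suc by simp
    also have "\<dots> = Suc n * (Suc n - 1)" by (cases n) (simp_all add: algebra_simps)
    finally show ?case .
  qed simp
  have T_eq: "N * (N - 1) div 2 = T" unfolding T_def using T2[of N] by simp
  have Nd: "N \<le> d" using strict_mono_ge[OF assms(2), of N] assms by simp
  have A2eq: "det A2 * monom 1 T = smult (det K) (monom 1 S)"
    unfolding A2_def K_def S_def T_def by (rule det_monom_wr)
  have A2eq': "det A2 = smult (det K) (monom 1 (S - T))"
  proof -
    have "monom (1::real) S = monom 1 (S - T) * monom 1 T" using ST by (simp add: mult_monom)
    then have "det A2 * monom 1 T = smult (det K) (monom 1 (S - T)) * monom 1 T"
      using A2eq by simp
    then have "det A2 * monom 1 T = smult (det K) (monom 1 (S - T)) * monom 1 T"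
      by (simp add: mult_smult_left)
    moreover have "monom (1::real) T \<noteq> 0" by simp
    ultimately show ?thesis using mult_right_cancel by blast
  qed
  have Ynz: "Y \<noteq> 0" by (simp add: Y_def)
  have "det W * Y ^ N = (Y ^ (d - N) * ((\<Prod>i<N. [:c (Suc i):]) * det A2)) * Y ^ N"
  proof -
    have Yd: "Y ^ d = Y ^ (d - N) * Y ^ N" using Nd by (simp add: power_add[symmetric])
    have "det W * Y ^ N = Y ^ d * ((\<Prod>i<N. [:c (Suc i):]) * det A2)"
      using detWU lap detMD by simp
    also have "\<dots> = (Y ^ (d - N) * ((\<Prod>i<N. [:c (Suc i):]) * det A2)) * Y ^ N"
      unfolding Yd by (simp only: mult_ac)
    finally show ?thesis .
  qed
  then have "det W = Y ^ (d - N) * ((\<Prod>i<N. [:c (Suc i):]) * det A2)"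
    using Ynz by simp
  also have "(\<Prod>i<N. [:c (Suc i):]) = [:(\<Prod>i<N. c (Suc i)):]"
    by (rule cpoly.hom_prod[symmetric])
  finally have "det W = smult ((\<Prod>i<N. c (Suc i)) * det K) (monom 1 (S - T) * Y ^ (d - N))"
    by (simp add: A2eq' algebra_simps)
  moreover have "(\<Prod>i<N. c (Suc i)) * det K \<noteq> 0" using cnz Knz by simp
  ultimately show ?thesis unfolding W_def S_eq T_eq Y_def by blast
qed

end
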